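(* Let $G$ be a finite connected weighted graph with $N$ vertices, let $0=\lambda_0<\lambda_1\le\cdots\le\lambda_{N-1}$ be the eigenvalues (with multiplicity) of its weighted Laplacian $L_w$ on $\ell^2(G)$, and let $\mathcal{S}=(S_m)_{m=0,\ldots,n}$ be a partition of $V(G)$ with $K_m(\mathcal{S})>0$ for all $m=0,\ldots,n-1$. Then \[ \mathcal{N}\left[0,\ (2\delta_{\mathcal{S},2}^2)^{-1}\right)\le|S_0| \quad\text{and}\quad \mathcal{N}\left[(2\delta_{\mathcal{S},2}^2)^{-1},\ \lambda_{N-1}\right]\ge N-|S_0|. \]
   Context: $G$ has vertex set $V(G)$ and symmetric weights $w:V(G)\times V(G)\to[0,\infty)$ with $w(u,u)=0$; connected means the graph with edges $\{(u,v):w(u,v)>0\}$ is connected. Vertex weight $\nu\equiv1$. $(L_wf)(v)=\sum_{u}(f(v)-f(u))w(v,u)$. For an interval $I$, $\mathcal{N}I$ is the number of eigenvalues of $L_w$ in $I$ counted with multiplicity. $w_A(v)=\sum_{u\in A}w(u,v)$; $D_m=\sup_{v\in S_m}w_{S_{m+1}}(v)$, $K_m=\inf_{v\in S_{m+1}}w_{S_m}(v)$, and $\delta_{\mathcal{S},2}=\left(\sum_{m=1}^n\sum_{k=1}^m\frac{1}{K_{k-1}}\prod_{i=k}^{m-1}\frac{D_i}{K_i}\right)^{1/2}$ (empty products $=1$, empty sums $=0$, and $(2\delta_{\mathcal{S},2}^2)^{-1}=+\infty$ if $\delta_{\mathcal{S},2}=0$). *)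

theory Defs
  imports "Jordan_Normal_Form.Char_Poly" "HOL-Library.Extended_Real"
begin

definition weighted_graph :: "nat \<Rightarrow> (nat \<Rightarrow> nat \<Rightarrow> real) \<Rightarrow> bool" where
  "weighted_graph N w \<longleftrightarrow>
     (\<forall>u<N. \<forall>v<N. w u v \<ge> 0 \<and> w u v = w v u) \<and> (\<forall>u<N. w u u = 0)"

definition connected_wg :: "nat \<Rightarrow> (nat \<Rightarrow> nat \<Rightarrow> real) \<Rightarrow> bool" where
  "connected_wg N w \<longleftrightarrow>
     (\<forall>u<N. \<forall>v<N. (\<lambda>a b. a < N \<and> b < N \<and> w a b > 0)\<^sup>*\<^sup>* u v)"

text \<open>Weighted Laplacian (vertex weight 1): (L f)(v) = sum_u (f v - f u) w(v,u).\<close>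
definition laplacian :: "nat \<Rightarrow> (nat \<Rightarrow> nat \<Rightarrow> real) \<Rightarrow> real mat" where
  "laplacian N w = mat N N (\<lambda>(i,j). if i = j then (\<Sum>u<N. w i u) else - w i j)"

definition eig_count :: "real mat \<Rightarrow> (real \<Rightarrow> bool) \<Rightarrow> nat" where
  "eig_count A P = (\<Sum>x\<in>{x. poly (char_poly A) x = 0 \<and> P x}. order x (char_poly A))"

definition max_eig :: "real mat \<Rightarrow> real" where
  "max_eig A = Max {x. poly (char_poly A) x = 0}"

definition wA :: "(nat \<Rightarrow> nat \<Rightarrow> real) \<Rightarrow> nat set \<Rightarrow> nat \<Rightarrow> real" where
  "wA w A v = (\<Sum>u\<in>A. w u v)"

definition D_S :: "(nat \<Rightarrow> nat \<Rightarrow> real) \<Rightarrow> (nat \<Rightarrow> nat set) \<Rightarrow> nat \<Rightarrow> real" where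
  "D_S w S m = Sup ((\<lambda>v. wA w (S (Suc m)) v) ` S m)"

definition K_S :: "(nat \<Rightarrow> nat \<Rightarrow> real) \<Rightarrow> (nat \<Rightarrow> nat set) \<Rightarrow> nat \<Rightarrow> real" where
  "K_S w S m = Inf ((\<lambda>v. wA w (S m) v) ` S (Suc m))"

definition delta2 :: "(nat \<Rightarrow> nat \<Rightarrow> real) \<Rightarrow> (nat \<Rightarrow> nat set) \<Rightarrow> nat \<Rightarrow> real" where
  "delta2 w S n = sqrt (\<Sum>m=1..n. \<Sum>k=1..m.
      (1 / K_S w S (k - 1)) * (\<Prod>i=k..<m. D_S w S i / K_S w S i))"

definition threshold :: "(nat \<Rightarrow> nat \<Rightarrow> real) \<Rightarrow> (nat \<Rightarrow> nat set) \<Rightarrow> nat \<Rightarrow> ereal" where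
  "threshold w S n = (if delta2 w S n = 0 then \<infinity> else ereal (1 / (2 * (delta2 w S n)\<^sup>2)))"

definition is_partition :: "nat \<Rightarrow> (nat \<Rightarrow> nat set) \<Rightarrow> nat \<Rightarrow> bool" where
  "is_partition N S n \<longleftrightarrow>
     (\<Union>m\<le>n. S m) = {..<N} \<and> (\<forall>m\<le>n. S m \<noteq> {}) \<and>
     (\<forall>i\<le>n. \<forall>j\<le>n. i \<noteq> j \<longrightarrow> S i \<inter> S j = {})"

end

theory Submission
  imports Defs
begin


lemma real_eigenvalue_exists:
  fixes A :: "real mat"
  assumes A: "A \<in> carrier_mat n n" and sym: "transpose_mat A = A" and n: "n > 0"
  shows "\<exists>e v. v \<in> carrier_vec n \<and> v \<noteq> 0\<^sub>v n \<and> A *\<^sub>v v = e \<cdot>\<^sub>v v"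
proof -
  let ?Ac = "map_mat complex_of_real A"
  have Ac: "?Ac \<in> carrier_mat n n" using A by simp
  obtain as where cp: "char_poly ?Ac = (\<Prod>a\<leftarrow>as. [:- a, 1:])" and las: "length as = n"
    using char_poly_factorized[OF Ac] by blast
  define k where "k = hd as"
  have "k \<in> set as" using las n unfolding k_def by (cases as, auto)
  hence "poly (char_poly ?Ac) k = 0" unfolding cp
    by (simp add: poly_prod_list prod_list_zero_iff)
  hence "eigenvalue ?Ac k" using eigenvalue_root_char_poly[OF Ac] by simp
  then obtain z where ev: "eigenvector ?Ac z k" unfolding eigenvalue_def by blast
  hence z: "z \<in> carrier_vec n" and z0: "z \<noteq> 0\<^sub>v n" and Az: "?Ac *\<^sub>v z = k \<cdot>\<^sub>v z"
    unfolding eigenvector_def using Ac by auto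
  define s where "s = (\<Sum>i<n. \<Sum>j<n. cnj (z $ i) * complex_of_real (A $$ (i,j)) * z $ j)"
  define t where "t = (\<Sum>i<n. cnj (z $ i) * z $ i)"
  have "s = (\<Sum>i<n. cnj (z $ i) * (?Ac *\<^sub>v z) $ i)"
    unfolding s_def
    by (rule sum.cong, simp, insert A z, auto simp: scalar_prod_def sum_distrib_left atLeast0LessThan
        intro!: sum.cong)
  also have "\<dots> = k * t" unfolding Az t_def using z
    by (simp add: sum_distrib_left algebra_simps)
  finally have skt: "s = k * t" .
  have "cnj s = (\<Sum>i<n. \<Sum>j<n. z $ i * complex_of_real (A $$ (i,j)) * cnj (z $ j))"
    unfolding s_def by simp
  also have "\<dots> = (\<Sum>j<n. \<Sum>i<n. z $ i * complex_of_real (A $$ (i,j)) * cnj (z $ j))"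
    by (rule sum.swap)
  also have "\<dots> = s" unfolding s_def
  proof (rule sum.cong[OF refl], rule sum.cong[OF refl])
    fix i j assume "i \<in> {..<n}" "j \<in> {..<n}"
    hence "A $$ (j,i) = A $$ (i,j)" using arg_cong[OF sym, of "\<lambda>M. M $$ (i,j)"] A by auto
    thus "z $ j * complex_of_real (A $$ (j, i)) * cnj (z $ i) = cnj (z $ i) * complex_of_real (A $$ (i, j)) * z $ j"
      by simp
  qed
  finally have sreal: "cnj s = s" .
  have treal: "cnj t = t" unfolding t_def by (simp add: mult.commute)
  have tr: "t = complex_of_real (\<Sum>i<n. (cmod (z $ i))^2)"
    unfolding t_def of_real_sum complex_norm_square by (simp add: mult.commute)
  have "t \<noteq> 0"
  proof
    assume t0: "t = 0"
    hence "complex_of_real (\<Sum>i<n. (cmod (z $ i))^2) = 0" unfolding tr by simp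
    hence "(\<Sum>i<n. (cmod (z $ i))^2) = 0" by (simp only: of_real_eq_0_iff)
    hence "\<forall>i\<in>{..<n}. (cmod (z $ i))^2 = 0"
      by (subst sum_nonneg_eq_0_iff[symmetric], auto)
    hence "z = 0\<^sub>v n" using z by (intro eq_vecI, auto)
    with z0 show False by simp
  qed
  have kreal: "cnj k = k"
  proof -
    have "k = s / t" using skt \<open>t \<noteq> 0\<close> by simp
    thus ?thesis using sreal treal by simp
  qed
  define r where "r = Re k"
  have kr: "k = complex_of_real r" using kreal unfolding r_def by (simp add: complex_eq_iff)
  have "poly (char_poly ?Ac) k = 0" by fact
  also have "char_poly ?Ac = map_poly complex_of_real (char_poly A)"
    by (rule of_real_hom.char_poly_hom[OF A])
  finally have "complex_of_real (poly (char_poly A) r) = 0" unfolding kr by simp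
  hence "poly (char_poly A) r = 0" by simp
  hence "eigenvalue A r" using eigenvalue_root_char_poly[OF A] by simp
  then obtain v where "eigenvector A v r" unfolding eigenvalue_def by blast
  thus ?thesis unfolding eigenvector_def using A by auto
qed

lemma householder_exists:
  fixes v :: "real vec"
  assumes v: "v \<in> carrier_vec n" and vv: "v \<bullet> v = 1" and n: "n > 0"
  shows "\<exists>H. H \<in> carrier_mat n n \<and> transpose_mat H = H \<and> H * H = 1\<^sub>m n \<and> col H 0 = v"
proof -
  define u where "u = (\<lambda>i. (if i = 0 then 1 else 0) - v $ i :: real)"
  define \<sigma> where "\<sigma> = (\<Sum>k<n. (u k)^2)"
  define c where "c = 2 / \<sigma>"
  define H where "H = mat n n (\<lambda>(i,j). (if i = j then 1 else 0) - c * u i * u j)"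
  have H: "H \<in> carrier_mat n n" unfolding H_def by simp
  have cs: "c * c * \<sigma> = 2 * c" unfolding c_def by (cases "\<sigma> = 0", auto)
  have vsum: "(\<Sum>k<n. (v $ k)^2) = 1" using vv v
    by (simp add: scalar_prod_def power2_eq_square atLeast0LessThan)
  have sig: "\<sigma> = 2 * (1 - v $ 0)"
  proof -
    have "\<sigma> = (\<Sum>k<n. (if k = 0 then 1 else 0) - 2 * (if k = 0 then v $ k else 0) + (v $ k)^2)"
      unfolding \<sigma>_def u_def by (rule sum.cong, auto simp: power2_eq_square algebra_simps)
    also have "\<dots> = 1 - 2 * v $ 0 + 1"
      using n by (simp add: sum.distrib sum_subtractf vsum sum.delta flip: sum_distrib_left)
    finally show ?thesis by simp
  qed
  have HH: "H * H = 1\<^sub>m n"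
  proof (rule eq_matI)
    fix i j assume i: "i < dim_row (1\<^sub>m n :: real mat)" and j: "j < dim_col (1\<^sub>m n :: real mat)"
    hence i: "i < n" and j: "j < n" by auto
    have "(H * H) $$ (i,j) = (\<Sum>k<n. ((if i = k then 1 else 0) - c * u i * u k) * ((if k = j then 1 else 0) - c * u k * u j))"
      using i j H by (simp add: scalar_prod_def H_def atLeast0LessThan)
    also have "\<dots> = (\<Sum>k<n. (if i = k then (if k = j then 1 else 0) else 0)
        - (if k = i then c * u i * u j else 0) - (if k = j then c * u i * u j else 0)
        + (c * c * u i * u j) * (u k)^2)"
      by (rule sum.cong, auto simp: algebra_simps power2_eq_square)
    also have "\<dots> = (if i = j then 1 else 0) - c * u i * u j - c * u i * u j + (c * c * u i * u j) * \<sigma>"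
      using i j unfolding \<sigma>_def by (simp add: sum.distrib sum_subtractf sum_distrib_left)
    also have "(c * c * u i * u j) * \<sigma> = (c * c * \<sigma>) * (u i * u j)" by (simp add: ac_simps)
    also have "\<dots> = 2 * c * (u i * u j)" unfolding cs ..
    also have "(if i = j then 1 else 0) - c * u i * u j - c * u i * u j + 2 * c * (u i * u j) = (if i = j then (1::real) else 0)"
      by (simp add: algebra_simps)
    finally show "(H * H) $$ (i,j) = 1\<^sub>m n $$ (i,j)" using i j by simp
  qed (insert H, auto)
  have HT: "transpose_mat H = H" unfolding H_def by (rule eq_matI, auto)
  have colH: "col H 0 = v"
  proof (rule eq_vecI)
    fix i assume "i < dim_vec v" hence i: "i < n" using v by auto
    have "col H 0 $ i = (if i = 0 then 1 else 0) - c * u i * u 0"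
      using i n H unfolding H_def by simp
    also have "\<dots> = v $ i"
    proof (cases "\<sigma> = 0")
      case True
      hence "\<forall>k\<in>{..<n}. (u k)^2 = 0" unfolding \<sigma>_def
        by (subst sum_nonneg_eq_0_iff[symmetric], auto)
      hence "u i = 0" using i by auto
      thus ?thesis unfolding u_def c_def using True by auto
    next
      case False
      have "c * u 0 = 1" using False unfolding c_def sig u_def by (simp add: field_simps)
      hence "c * u i * u 0 = u i" by (metis mult.assoc mult.commute mult.right_neutral)
      hence "(if i = 0 then 1 else 0) - c * u i * u 0 = (if i = 0 then 1 else 0) - u i" by simp
      also have "\<dots> = v $ i" unfolding u_def by simp
      finally show ?thesis .
    qed
    finally show "col H 0 $ i = v $ i" .
  qed (insert v n H, auto)
  show ?thesis using H HT HH colH by blast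
qed

definition diag_of :: "real list \<Rightarrow> real mat" where
  "diag_of es = mat (length es) (length es) (\<lambda>(i,j). if i = j then es ! i else 0)"

lemma spectral_real_sym:
  fixes A :: "real mat"
  assumes "A \<in> carrier_mat n n" and "transpose_mat A = A"
  shows "\<exists>U es. U \<in> carrier_mat n n \<and> transpose_mat U * U = 1\<^sub>m n \<and> length es = n
     \<and> transpose_mat U * A * U = diag_of es"
  using assms
proof (induction n arbitrary: A)
  case 0
  show ?case
    by (rule exI[of _ "1\<^sub>m 0"], rule exI[of _ "[]"], insert 0, auto simp: diag_of_def)
next
  case (Suc m A)
  define n where "n = Suc m"
  have A: "A \<in> carrier_mat n n" and sym: "transpose_mat A = A" using Suc n_def by auto
  obtain e v0 where v0: "v0 \<in> carrier_vec n" and v00: "v0 \<noteq> 0\<^sub>v n" and Av0: "A *\<^sub>v v0 = e \<cdot>\<^sub>v v0"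
    using real_eigenvalue_exists[OF A sym] n_def by auto
  define nv where "nv = v0 \<bullet> v0"
  have nv: "nv = (\<Sum>i<n. (v0 $ i)^2)" unfolding nv_def scalar_prod_def using v0
    by (simp add: power2_eq_square atLeast0LessThan)
  have "nv \<noteq> 0"
  proof
    assume "nv = 0"
    hence "\<forall>i\<in>{..<n}. (v0 $ i)^2 = 0" unfolding nv
      by (subst sum_nonneg_eq_0_iff[symmetric], auto)
    hence "v0 = 0\<^sub>v n" using v0 by (intro eq_vecI, auto)
    with v00 show False by simp
  qed
  hence nvpos: "nv > 0" unfolding nv by (metis nv sum_nonneg zero_le_power2 order_le_less)
  define v where "v = (1 / sqrt nv) \<cdot>\<^sub>v v0"
  have v: "v \<in> carrier_vec n" unfolding v_def using v0 by simp
  have vv: "v \<bullet> v = 1"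
  proof -
    have "v \<bullet> v = (1 / sqrt nv) * (1 / sqrt nv) * nv" unfolding v_def nv_def
      using v0 by (simp add: smult_scalar_prod_distrib scalar_prod_smult_distrib)
    also have "\<dots> = 1" using nvpos by (simp add: field_simps)
    finally show ?thesis .
  qed
  have Av: "A *\<^sub>v v = e \<cdot>\<^sub>v v" unfolding v_def
    using mult_mat_vec[OF A v0] Av0 v0 by (auto simp: smult_smult_assoc mult.commute)
  obtain H where H: "H \<in> carrier_mat n n" and HT: "transpose_mat H = H" and HH: "H * H = 1\<^sub>m n"
    and colH: "col H 0 = v"
    using householder_exists[OF v vv] n_def by auto
  define A' where "A' = H * A * H"
  have A': "A' \<in> carrier_mat n n" unfolding A'_def using H A by simp
  have A'sym: "transpose_mat A' = A'"
  proof -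
    have "transpose_mat A' = transpose_mat H * transpose_mat (H * A)"
      unfolding A'_def by (rule transpose_mult[of _ n n], insert H A, auto)
    also have "transpose_mat (H * A) = transpose_mat A * transpose_mat H"
      by (rule transpose_mult[of _ n n], insert H A, auto)
    finally show ?thesis unfolding sym HT A'_def using H A by simp
  qed
  have Hv: "H *\<^sub>v v = unit_vec n 0"
  proof -
    have "col (H * H) 0 = H *\<^sub>v col H 0" by (rule col_mult2[of H n n H n 0], insert H n_def, auto)
    hence "H *\<^sub>v v = col (H * H) 0" unfolding colH by simp
    thus ?thesis unfolding HH using n_def by simp
  qed
  have colA': "col A' 0 = e \<cdot>\<^sub>v unit_vec n 0"
  proof -
    have "col A' 0 = (H * A) *\<^sub>v v" unfolding A'_def colH[symmetric] using H A n_def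
      by (subst col_mult2[of _ n n], auto)
    also have "\<dots> = H *\<^sub>v (A *\<^sub>v v)" using H A v by simp
    also have "\<dots> = e \<cdot>\<^sub>v unit_vec n 0" unfolding Av mult_mat_vec[OF H v] Hv ..
    finally show ?thesis .
  qed
  have A'c0: "A' $$ (i, 0) = (if i = 0 then e else 0)" if "i < n" for i
    using arg_cong[OF colA', of "\<lambda>x. x $ i"] that A' n_def by auto
  have A'r0: "A' $$ (0, j) = (if j = 0 then e else 0)" if "j < n" for j
  proof -
    have "A' $$ (0, j) = transpose_mat A' $$ (0, j)" using A'sym by simp
    also have "\<dots> = A' $$ (j, 0)" using that A' n_def by simp
    finally show ?thesis using A'c0[OF that] by simp
  qed
  define A3 where "A3 = mat m m (\<lambda>(i,j). A' $$ (Suc i, Suc j))"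
  have A3: "A3 \<in> carrier_mat m m" unfolding A3_def by simp
  have A3sym: "transpose_mat A3 = A3"
  proof (rule eq_matI)
    fix i j assume "i < dim_row A3" "j < dim_col A3"
    hence ij: "i < m" "j < m" unfolding A3_def by auto
    have "A' $$ (Suc j, Suc i) = transpose_mat A' $$ (Suc i, Suc j)" using ij A' n_def by simp
    also have "\<dots> = A' $$ (Suc i, Suc j)" using A'sym by simp
    finally show "transpose_mat A3 $$ (i, j) = A3 $$ (i, j)" unfolding A3_def using ij by simp
  qed (auto simp: A3_def)
  define E where "E = mat 1 1 (\<lambda>_. e)"
  have E: "E \<in> carrier_mat 1 1" unfolding E_def by simp
  have A'block: "A' = four_block_mat E (0\<^sub>m 1 m) (0\<^sub>m m 1) A3"
  proof (rule eq_matI)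
    fix i j assume "i < dim_row (four_block_mat E (0\<^sub>m 1 m) (0\<^sub>m m 1) A3)"
      "j < dim_col (four_block_mat E (0\<^sub>m 1 m) (0\<^sub>m m 1) A3)"
    hence ij: "i < n" "j < n" using E A3 n_def by auto
    show "A' $$ (i, j) = four_block_mat E (0\<^sub>m 1 m) (0\<^sub>m m 1) A3 $$ (i, j)"
    proof (cases "i = 0")
      case True thus ?thesis using ij A'r0[of j] E A3 n_def by (auto simp: E_def)
    next
      case False
      then obtain i' where i': "i = Suc i'" by (cases i, auto)
      show ?thesis
      proof (cases "j = 0")
        case True thus ?thesis using ij A'c0[of i] E A3 n_def i' by (auto simp: E_def)
      next
        case False
        then obtain j' where j': "j = Suc j'" by (cases j, auto)
        show ?thesis using ij E A3 n_def i' j' by (auto simp: A3_def)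
      qed
    qed
  qed (insert A' E A3 n_def, auto)
  obtain U3 es3 where U3: "U3 \<in> carrier_mat m m" and U3o: "transpose_mat U3 * U3 = 1\<^sub>m m"
    and les3: "length es3 = m" and U3d: "transpose_mat U3 * A3 * U3 = diag_of es3"
    using Suc.IH[OF A3 A3sym] by blast
  define B where "B = four_block_mat (1\<^sub>m 1) (0\<^sub>m 1 m) (0\<^sub>m m 1) U3"
  have B: "B \<in> carrier_mat n n" unfolding B_def n_def
    using four_block_carrier_mat[of "1\<^sub>m 1" 1 1 U3 m m "0\<^sub>m 1 m" "0\<^sub>m m 1"] U3 by simp
  have BT: "transpose_mat B = four_block_mat (1\<^sub>m 1) (0\<^sub>m 1 m) (0\<^sub>m m 1) (transpose_mat U3)"
    unfolding B_def using U3 by (subst transpose_four_block_mat, auto)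
  define U where "U = H * B"
  have U: "U \<in> carrier_mat n n" unfolding U_def using H B by simp
  have UT: "transpose_mat U = transpose_mat B * H" unfolding U_def using H B HT
    by (simp add: transpose_mult[of _ n n])
  have "transpose_mat U * U = (transpose_mat B * H) * (H * B)"
    using UT by (simp add: U_def)
  also have "\<dots> = transpose_mat B * (H * H) * B"
    using H B by (simp add: assoc_mult_mat[of _ n n _ n _ n])
  also have "\<dots> = transpose_mat B * B" unfolding HH using B by simp
  also have "\<dots> = four_block_mat (1\<^sub>m 1) (0\<^sub>m 1 m) (0\<^sub>m m 1) (transpose_mat U3 * U3)"
    unfolding BT unfolding B_def using U3
    by (subst mult_four_block_mat[of _ 1 1 _ m _ m], auto)
  also have "\<dots> = 1\<^sub>m n" unfolding U3o n_def by simp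
  finally have Uo: "transpose_mat U * U = 1\<^sub>m n" .
  have "transpose_mat U * A * U = (transpose_mat B * H) * A * (H * B)"
    using UT by (simp add: U_def)
  also have "\<dots> = transpose_mat B * A' * B"
    unfolding A'_def using H B A by (simp add: assoc_mult_mat[of _ n n _ n _ n])
  also have "\<dots> = four_block_mat E (0\<^sub>m 1 m) (0\<^sub>m m 1) (transpose_mat U3 * A3 * U3)"
  proof -
    have "four_block_mat (1\<^sub>m 1) (0\<^sub>m 1 m) (0\<^sub>m m 1) (transpose_mat U3) * four_block_mat E (0\<^sub>m 1 m) (0\<^sub>m m 1) A3
      = four_block_mat E (0\<^sub>m 1 m) (0\<^sub>m m 1) (transpose_mat U3 * A3)"
      using U3 A3 E by (subst mult_four_block_mat[of _ 1 1 _ m _ m], auto)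
    moreover have "four_block_mat E (0\<^sub>m 1 m) (0\<^sub>m m 1) (transpose_mat U3 * A3) * B
      = four_block_mat E (0\<^sub>m 1 m) (0\<^sub>m m 1) (transpose_mat U3 * A3 * U3)"
      unfolding B_def using U3 A3 E by (subst mult_four_block_mat[of _ 1 1 _ m _ m], auto)
    ultimately show ?thesis unfolding BT A'block by simp
  qed
  also have "\<dots> = diag_of (e # es3)"
    unfolding U3d
  proof (rule eq_matI)
    fix i j assume "i < dim_row (diag_of (e # es3))" "j < dim_col (diag_of (e # es3))"
    hence ij: "i < Suc m" "j < Suc m" using les3 by (auto simp: diag_of_def)
    show "four_block_mat E (0\<^sub>m 1 m) (0\<^sub>m m 1) (diag_of es3) $$ (i, j) = diag_of (e # es3) $$ (i, j)"
      using ij les3 by (cases i; cases j; auto simp: diag_of_def E_def)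
  qed (insert les3, auto simp: diag_of_def E_def)
  finally show ?case using U Uo les3 unfolding n_def by (intro exI[of _ U] exI[of _ "e # es3"], auto)
qed

lemma diag_of_carrier[simp]: "diag_of es \<in> carrier_mat (length es) (length es)"
  unfolding diag_of_def by simp

lemma spectral_char_poly:
  fixes A :: "real mat"
  assumes A: "A \<in> carrier_mat n n" and U: "U \<in> carrier_mat n n" and Uo: "transpose_mat U * U = 1\<^sub>m n"
    and les: "length es = n" and D: "transpose_mat U * A * U = diag_of es"
  shows "char_poly A = (\<Prod>a\<leftarrow>es. [:- a, 1:])"
proof -
  have UT: "transpose_mat U \<in> carrier_mat n n" using U by simp
  have Uo2: "U * transpose_mat U = 1\<^sub>m n" by (rule mat_mult_left_right_inverse[OF UT U Uo])
  have Dc: "diag_of es \<in> carrier_mat n n" using diag_of_carrier[of es] les by simp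
  have "U * diag_of es * transpose_mat U = (U * transpose_mat U) * A * (U * transpose_mat U)"
    unfolding D[symmetric] using U A by (simp add: assoc_mult_mat[of _ n n _ n _ n])
  also have "\<dots> = A" unfolding Uo2 using A by simp
  finally have AD: "A = U * diag_of es * transpose_mat U" by simp
  have "similar_mat A (diag_of es)"
    by (rule similar_matI[of _ _ _ _ n], insert A U UT Dc Uo Uo2 AD, auto)
  hence "char_poly A = char_poly (diag_of es)" by (rule char_poly_similar)
  also have "\<dots> = (\<Prod>a\<leftarrow>diag_mat (diag_of es). [:- a, 1:])"
    by (rule char_poly_upper_triangular[OF Dc], auto simp: upper_triangular_def diag_of_def)
  also have "diag_mat (diag_of es) = es"
    by (rule nth_equalityI, auto simp: diag_mat_def diag_of_def)
  finally show ?thesis .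
qed

lemma spectral_quad:
  fixes A :: "real mat"
  assumes A: "A \<in> carrier_mat n n" and U: "U \<in> carrier_mat n n" and Uo: "transpose_mat U * U = 1\<^sub>m n"
    and les: "length es = n" and D: "transpose_mat U * A * U = diag_of es"
    and g: "g \<in> carrier_vec n"
  shows "(U *\<^sub>v g) \<bullet> (A *\<^sub>v (U *\<^sub>v g)) = (\<Sum>i<n. es ! i * (g $ i)^2)"
    and "(U *\<^sub>v g) \<bullet> (U *\<^sub>v g) = g \<bullet> g"
proof -
  have UT: "transpose_mat U \<in> carrier_mat n n" using U by simp
  have gen: "(U *\<^sub>v g) \<bullet> (M *\<^sub>v (U *\<^sub>v g)) = g \<bullet> ((transpose_mat U * M * U) *\<^sub>v g)"
    if M: "M \<in> carrier_mat n n" for M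
  proof -
    have TMU: "transpose_mat U * M * U \<in> carrier_mat n n" using UT M U by simp
    have "(U *\<^sub>v g) \<bullet> (M *\<^sub>v (U *\<^sub>v g)) = (M *\<^sub>v (U *\<^sub>v g)) \<bullet> (U *\<^sub>v g)"
      by (rule comm_scalar_prod[of _ n], insert M U g, auto)
    also have "\<dots> = (transpose_mat U *\<^sub>v (M *\<^sub>v (U *\<^sub>v g))) \<bullet> g"
      by (rule transpose_vec_mult_scalar[symmetric, of _ n n], insert M U g, auto)
    also have "transpose_mat U *\<^sub>v (M *\<^sub>v (U *\<^sub>v g)) = (transpose_mat U * M * U) *\<^sub>v g"
      using M U UT g by (simp add: assoc_mult_mat_vec[of _ n n _ n])
    also have "((transpose_mat U * M * U) *\<^sub>v g) \<bullet> g = g \<bullet> ((transpose_mat U * M * U) *\<^sub>v g)"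
      by (rule comm_scalar_prod[of _ n], rule mult_mat_vec_carrier[OF TMU g], rule g)
    finally show ?thesis .
  qed
  have Dg: "diag_of es *\<^sub>v g = vec n (\<lambda>i. es ! i * g $ i)"
  proof (rule eq_vecI)
    fix i assume "i < dim_vec (vec n (\<lambda>i. es ! i * g $ i))"
    hence i: "i < n" by simp
    have "(\<Sum>j = 0..<n. (if i = j then es ! i else 0) * g $ j) = (\<Sum>j = 0..<n. if i = j then es ! i * g $ j else 0)"
      by (rule sum.cong, auto)
    also have "\<dots> = es ! i * g $ i" using i by (simp add: sum.delta)
    finally have key: "(\<Sum>j = 0..<n. (if i = j then es ! i else 0) * g $ j) = es ! i * g $ i" .
    show "(diag_of es *\<^sub>v g) $ i = vec n (\<lambda>i. es ! i * g $ i) $ i"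
      using i les g key by (simp add: diag_of_def scalar_prod_def)
  qed (insert les, auto simp: diag_of_def)
  show "(U *\<^sub>v g) \<bullet> (A *\<^sub>v (U *\<^sub>v g)) = (\<Sum>i<n. es ! i * (g $ i)^2)"
    unfolding gen[OF A] D Dg using g
    by (simp add: scalar_prod_def atLeast0LessThan power2_eq_square algebra_simps)
  have "(U *\<^sub>v g) \<bullet> (U *\<^sub>v g) = (U *\<^sub>v g) \<bullet> (1\<^sub>m n *\<^sub>v (U *\<^sub>v g))" using U g by simp
  also have "\<dots> = g \<bullet> g" unfolding gen[OF one_carrier_mat] using U Uo g by simp
  finally show "(U *\<^sub>v g) \<bullet> (U *\<^sub>v g) = g \<bullet> g" .
qed

lemma order_prod_linear:
  "order x (\<Prod>a\<leftarrow>es. [:- a, 1:]) = count_list es (x::real)"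
proof (induction es)
  case Nil thus ?case by simp
next
  case (Cons a es)
  have nz: "(\<Prod>a\<leftarrow>es. [:- a, 1:]) \<noteq> (0 :: real poly)"
    by (auto simp: prod_list_zero_iff)
  have "order x ([:- a, 1:] * (\<Prod>a\<leftarrow>es. [:- a, 1:])) = order x [:- a, 1:] + order x (\<Prod>a\<leftarrow>es. [:- a, 1:])"
    by (rule order_mult, rule no_zero_divisors, simp, rule nz)
  also have "order x [:- a, 1:] = (if a = x then 1 else 0)"
  proof (cases "a = x")
    case True thus ?thesis using order_power_n_n[of x 1] by simp
  next
    case False thus ?thesis by (simp add: order_0I)
  qed
  finally show ?case using Cons by simp
qed

lemma sum_count_list:
  "(\<Sum>x\<in>{x. x \<in> set es \<and> P x}. count_list es x) = length (filter P es)"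
proof (induction es)
  case Nil thus ?case by simp
next
  case (Cons a es)
  show ?case
  proof (cases "P a")
    case False
    have eq: "{x. x \<in> set (a # es) \<and> P x} = {x. x \<in> set es \<and> P x}" using False by auto
    have "(\<Sum>x\<in>{x. x \<in> set (a # es) \<and> P x}. count_list (a # es) x) = (\<Sum>x\<in>{x. x \<in> set es \<and> P x}. count_list es x)"
      by (rule sum.cong[OF eq], use False in auto)
    thus ?thesis using Cons False by simp
  next
    case True
    have fin: "finite {x. x \<in> set es \<and> P x}" by simp
    have "(\<Sum>x\<in>{x. x \<in> set (a # es) \<and> P x}. count_list (a # es) x)
        = (\<Sum>x\<in>{x. x \<in> set (a # es) \<and> P x}. count_list es x + (if a = x then 1 else 0))"
      by (rule sum.cong, auto)
    also have "\<dots> = (\<Sum>x\<in>{x. x \<in> set (a # es) \<and> P x}. count_list es x) + 1"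
      using True by (simp add: sum.distrib)
    also have "(\<Sum>x\<in>{x. x \<in> set (a # es) \<and> P x}. count_list es x) = (\<Sum>x\<in>{x. x \<in> set es \<and> P x}. count_list es x)"
    proof (cases "a \<in> set es")
      case True
      hence "{x. x \<in> set (a # es) \<and> P x} = {x. x \<in> set es \<and> P x}" by auto
      thus ?thesis by simp
    next
      case False
      hence "{x. x \<in> set (a # es) \<and> P x} = insert a {x. x \<in> set es \<and> P x}" using \<open>P a\<close> by auto
      thus ?thesis using False fin by (simp add: count_list_0_iff)
    qed
    finally show ?thesis using Cons True by simp
  qed
qed

lemma eig_count_list:
  fixes A :: "real mat"
  assumes "char_poly A = (\<Prod>a\<leftarrow>es. [:- a, 1:])"
  shows "eig_count A P = length (filter P es)"
proof -
  have roots: "{x. poly (char_poly A) x = 0 \<and> P x} = {x. x \<in> set es \<and> P x}"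
    unfolding assms by (auto simp: poly_prod_list prod_list_zero_iff)
  show ?thesis unfolding eig_count_def roots unfolding assms order_prod_linear
    by (rule sum_count_list)
qed

lemma max_eig_list:
  fixes A :: "real mat"
  assumes "char_poly A = (\<Prod>a\<leftarrow>es. [:- a, 1:])"
  shows "max_eig A = Max (set es)"
proof -
  have roots: "{x. poly (char_poly A) x = 0} = set es"
    unfolding assms by (auto simp: poly_prod_list prod_list_zero_iff)
  show ?thesis unfolding max_eig_def roots ..
qed

lemma underdetermined_kernel:
  fixes M :: "real mat"
  assumes M: "M \<in> carrier_mat r c" and rc: "r < c"
  shows "\<exists>x. x \<in> carrier_vec c \<and> x \<noteq> 0\<^sub>v c \<and> M *\<^sub>v x = 0\<^sub>v r"
proof -
  define f where "f = (\<lambda>i. if i < r then row M i else 0\<^sub>v c)"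
  define M' where "M' = mat\<^sub>r c c f"
  have M': "M' \<in> carrier_mat c c" unfolding M'_def by simp
  have "M' = mat\<^sub>r c c (\<lambda>i. if i = c - 1 then 0\<^sub>v c else f i)"
    unfolding M'_def by (rule eq_matI, insert rc, auto simp: f_def)
  hence "det M' = 0"
    by (simp, intro det_row_0, insert rc M, auto simp: f_def)
  then obtain x where x: "x \<in> carrier_vec c" and x0: "x \<noteq> 0\<^sub>v c" and M'x: "M' *\<^sub>v x = 0\<^sub>v c"
    using det_0_iff_vec_prod_zero[OF M'] by blast
  have "M *\<^sub>v x = 0\<^sub>v r"
  proof (rule eq_vecI)
    fix i assume "i < dim_vec (0\<^sub>v r :: real vec)"
    hence i: "i < r" by simp
    have "(M *\<^sub>v x) $ i = row M i \<bullet> x" using M i by simp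
    also have "\<dots> = (M' *\<^sub>v x) $ i" unfolding M'_def using M i rc by (simp add: f_def)
    also have "\<dots> = 0" unfolding M'x using i rc by simp
    finally show "(M *\<^sub>v x) $ i = 0\<^sub>v r $ i" using i by simp
  qed (insert M, auto)
  thus ?thesis using x x0 by blast
qed

lemma laplacian_carrier: "laplacian N w \<in> carrier_mat N N"
  unfolding laplacian_def by simp

lemma laplacian_sym:
  assumes "weighted_graph N w"
  shows "transpose_mat (laplacian N w) = laplacian N w"
  using assms unfolding laplacian_def weighted_graph_def by (intro eq_matI, auto)

lemma laplacian_quad:
  assumes wg: "weighted_graph N w" and x: "x \<in> carrier_vec N"
  shows "2 * (x \<bullet> (laplacian N w *\<^sub>v x)) = (\<Sum>u<N. \<Sum>v<N. w u v * (x $ v - x $ u)^2)"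
proof -
  have sym: "w u v = w v u" if "u < N" "v < N" for u v using wg that unfolding weighted_graph_def by auto
  have diag: "w u u = 0" if "u < N" for u using wg that unfolding weighted_graph_def by auto
  have Lx: "(laplacian N w *\<^sub>v x) $ i = (\<Sum>j<N. w i j * (x $ i - x $ j))" if i: "i < N" for i
  proof -
    have "(laplacian N w *\<^sub>v x) $ i = (\<Sum>j<N. (if i = j then (\<Sum>u<N. w i u) else - w i j) * x $ j)"
      using i x by (simp add: laplacian_def scalar_prod_def atLeast0LessThan)
    also have "\<dots> = (\<Sum>j<N. (if i = j then (\<Sum>u<N. w i u) * x $ i else 0)) + (\<Sum>j<N. (if i = j then 0 else - w i j * x $ j))"
      by (subst sum.distrib[symmetric], rule sum.cong, auto)
    also have "\<dots> = (\<Sum>u<N. w i u) * x $ i - (\<Sum>j<N. w i j * x $ j)"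
    proof -
      have "(\<Sum>j<N. (if i = j then 0 else - w i j * x $ j)) = - (\<Sum>j<N. w i j * x $ j)"
        by (subst sum_negf[symmetric], rule sum.cong, insert diag[OF i], auto)
      thus ?thesis using i by (simp add: sum.delta)
    qed
    also have "\<dots> = (\<Sum>j<N. w i j * (x $ i - x $ j))"
      by (simp add: sum_distrib_left sum_subtractf algebra_simps)
    finally show ?thesis .
  qed
  have q: "x \<bullet> (laplacian N w *\<^sub>v x) = (\<Sum>u<N. \<Sum>v<N. w u v * (x $ u * x $ u - x $ u * x $ v))"
    using x Lx laplacian_carrier[of N w]
    by (simp add: scalar_prod_def atLeast0LessThan sum_distrib_left algebra_simps)
  have "(\<Sum>u<N. \<Sum>v<N. w u v * (x $ u * x $ u - x $ u * x $ v)) = (\<Sum>v<N. \<Sum>u<N. w u v * (x $ u * x $ u - x $ u * x $ v))"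
    by (rule sum.swap)
  also have "\<dots> = (\<Sum>u<N. \<Sum>v<N. w u v * (x $ v * x $ v - x $ v * x $ u))"
    by (rule sum.cong[OF refl], rule sum.cong[OF refl], simp add: sym)
  finally have q2: "(\<Sum>u<N. \<Sum>v<N. w u v * (x $ u * x $ u - x $ u * x $ v)) = (\<Sum>u<N. \<Sum>v<N. w u v * (x $ v * x $ v - x $ v * x $ u))" .
  have "2 * (x \<bullet> (laplacian N w *\<^sub>v x)) = (\<Sum>u<N. \<Sum>v<N. w u v * (x $ u * x $ u - x $ u * x $ v))
     + (\<Sum>u<N. \<Sum>v<N. w u v * (x $ v * x $ v - x $ v * x $ u))" unfolding q q2 by simp
  also have "\<dots> = (\<Sum>u<N. \<Sum>v<N. w u v * (x $ v - x $ u)^2)"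
    by (simp add: sum.distrib[symmetric] power2_eq_square algebra_simps)
  finally show ?thesis .
qed

fun sS :: "(nat \<Rightarrow> nat \<Rightarrow> real) \<Rightarrow> (nat \<Rightarrow> nat set) \<Rightarrow> nat \<Rightarrow> real" where
  "sS w S 0 = 0"
| "sS w S (Suc m) = 1 / K_S w S m + D_S w S m / K_S w S m * sS w S m"

lemma sS_closed: "sS w S m = (\<Sum>k=1..m. (1 / K_S w S (k - 1)) * (\<Prod>i=k..<m. D_S w S i / K_S w S i))"
proof (induction m)
  case 0 thus ?case by simp
next
  case (Suc m)
  have gen: "sum g {1..Suc m} = sum g {1..m} + g (Suc m)" for g :: "nat \<Rightarrow> real"
    by (simp add: sum.cl_ivl_Suc)
  have "(\<Sum>k=1..Suc m. (1 / K_S w S (k - 1)) * (\<Prod>i=k..<Suc m. D_S w S i / K_S w S i))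
    = (\<Sum>k=1..m. (1 / K_S w S (k - 1)) * (\<Prod>i=k..<Suc m. D_S w S i / K_S w S i)) + 1 / K_S w S m"
    by (subst gen, simp)
  also have "(\<Sum>k=1..m. (1 / K_S w S (k - 1)) * (\<Prod>i=k..<Suc m. D_S w S i / K_S w S i))
    = (\<Sum>k=1..m. (1 / K_S w S (k - 1)) * (\<Prod>i=k..<m. D_S w S i / K_S w S i) * (D_S w S m / K_S w S m))"
    by (rule sum.cong[OF refl], subst prod.atLeastLessThan_Suc, auto simp: mult_ac)
  also have "\<dots> = (\<Sum>k=1..m. (1 / K_S w S (k - 1)) * (\<Prod>i=k..<m. D_S w S i / K_S w S i)) * (D_S w S m / K_S w S m)"
    by (rule sum_distrib_right[symmetric])
  also have "\<dots> = D_S w S m / K_S w S m * sS w S m"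
    unfolding Suc by (rule mult.commute)
  finally show ?case by simp
qed

lemma beta_ineq: "(\<beta>::real) * y^2 \<le> (1 + \<beta>) * (\<beta> * (y - g)^2 + g^2)"
proof -
  have "(1 + \<beta>) * (\<beta> * (y - g)^2 + g^2) - \<beta> * y^2 = (\<beta> * (y - g) - g)^2"
    by (simp add: power2_eq_square algebra_simps)
  thus ?thesis by (smt (verit) zero_le_power2)
qed

lemma eps_lemma:
  fixes X E :: real
  assumes E: "E \<ge> 0" and h: "\<And>\<beta>. \<beta> > 0 \<Longrightarrow> X \<le> (1 + \<beta>) * E"
  shows "X \<le> E"
proof (rule field_le_epsilon)
  fix e :: real assume e: "e > 0"
  define \<beta> where "\<beta> = e / (E + 1)"
  have b: "\<beta> > 0" unfolding \<beta>_def using e E by simp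
  have "\<beta> * E \<le> e" unfolding \<beta>_def using e E by (simp add: field_simps)
  thus "X \<le> E + e" using h[OF b] by (simp add: algebra_simps)
qed

context
  fixes N n :: nat and w :: "nat \<Rightarrow> nat \<Rightarrow> real" and S :: "nat \<Rightarrow> nat set" and f :: "nat \<Rightarrow> real"
  assumes wg: "weighted_graph N w"
    and part: "is_partition N S n"
    and Kpos: "\<forall>m<n. K_S w S m > 0"
    and f0: "\<forall>v\<in>S 0. f v = 0"
begin

lemma S_sub: "m \<le> n \<Longrightarrow> S m \<subseteq> {..<N}"
  using part unfolding is_partition_def by blast

lemma S_fin: "m \<le> n \<Longrightarrow> finite (S m)"
  using S_sub finite_subset by blast

lemma S_ne: "m \<le> n \<Longrightarrow> S m \<noteq> {}"
  using part unfolding is_partition_def by blast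

lemma w_nonneg: "u < N \<Longrightarrow> v < N \<Longrightarrow> w u v \<ge> 0"
  using wg unfolding weighted_graph_def by auto

lemma K_le: assumes m: "m < n" and v: "v \<in> S (Suc m)" shows "K_S w S m \<le> wA w (S m) v"
  unfolding K_S_def by (rule cInf_le_finite, insert S_fin[of "Suc m"] m v, auto)

lemma D_ge: assumes m: "m < n" and u: "u \<in> S m" shows "wA w (S (Suc m)) u \<le> D_S w S m"
  unfolding D_S_def by (rule le_cSup_finite, insert S_fin[of m] m u, auto)

lemma wA_nonneg: assumes m: "m \<le> n" and u: "u < N" shows "wA w (S m) u \<ge> 0"
  unfolding wA_def by (rule sum_nonneg, insert S_sub[OF m] u w_nonneg, auto)

lemma D_nonneg: assumes m: "m < n" shows "D_S w S m \<ge> 0"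
proof -
  obtain u where u: "u \<in> S m" using S_ne[of m] m by auto
  have "u < N" using S_sub[of m] m u by auto
  thus ?thesis using D_ge[OF m u] wA_nonneg[of "Suc m" u] m by auto
qed

definition aa :: "nat \<Rightarrow> real" where "aa m = (\<Sum>v\<in>S m. (f v)^2)"
definition EE :: "nat \<Rightarrow> real" where
  "EE m = (\<Sum>u\<in>S m. \<Sum>v\<in>S (Suc m). w u v * (f v - f u)^2)"

lemma EE_nonneg: "m < n \<Longrightarrow> EE m \<ge> 0"
  unfolding EE_def using S_sub[of m] S_sub[of "Suc m"]
  by (intro sum_nonneg, auto intro!: mult_nonneg_nonneg w_nonneg)

lemma aa_nonneg: "aa m \<ge> 0" unfolding aa_def by (simp add: sum_nonneg)

lemma layer_ineq:
  assumes m: "m < n" and b: "\<beta> \<ge> 0"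
  shows "\<beta> * K_S w S m * aa (Suc m) \<le> (1 + \<beta>) * (\<beta> * EE m + D_S w S m * aa m)"
proof -
  let ?T = "\<Sum>u\<in>S m. \<Sum>v\<in>S (Suc m). w u v * (\<beta> * (f v)^2)"
  have "\<beta> * K_S w S m * aa (Suc m) = (\<Sum>v\<in>S (Suc m). \<beta> * (K_S w S m * (f v)^2))"
    unfolding aa_def by (simp add: sum_distrib_left algebra_simps)
  also have "\<dots> \<le> (\<Sum>v\<in>S (Suc m). \<beta> * (wA w (S m) v * (f v)^2))"
    by (rule sum_mono, rule mult_left_mono, rule mult_right_mono, insert K_le[OF m] b, auto)
  also have "\<dots> = (\<Sum>v\<in>S (Suc m). \<Sum>u\<in>S m. w u v * (\<beta> * (f v)^2))"
    unfolding wA_def by (simp add: sum_distrib_left sum_distrib_right algebra_simps)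
  also have "\<dots> = ?T" by (rule sum.swap)
  also have "\<dots> \<le> (\<Sum>u\<in>S m. \<Sum>v\<in>S (Suc m). w u v * ((1 + \<beta>) * (\<beta> * (f v - f u)^2 + (f u)^2)))"
  proof (rule sum_mono, rule sum_mono)
    fix u v assume u: "u \<in> S m" and v: "v \<in> S (Suc m)"
    have "w u v \<ge> 0" using u v S_sub[of m] S_sub[of "Suc m"] m w_nonneg by auto
    thus "w u v * (\<beta> * (f v)^2) \<le> w u v * ((1 + \<beta>) * (\<beta> * (f v - f u)^2 + (f u)^2))"
      by (rule mult_left_mono[OF beta_ineq])
  qed
  also have "\<dots> = (1 + \<beta>) * (\<beta> * EE m + (\<Sum>u\<in>S m. (\<Sum>v\<in>S (Suc m). w u v) * (f u)^2))"
    unfolding EE_def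
    by (simp add: sum_distrib_left sum_distrib_right sum.distrib algebra_simps)
  also have "(\<Sum>u\<in>S m. (\<Sum>v\<in>S (Suc m). w u v) * (f u)^2) \<le> (\<Sum>u\<in>S m. D_S w S m * (f u)^2)"
  proof (rule sum_mono, rule mult_right_mono)
    fix u assume u: "u \<in> S m"
    have "(\<Sum>v\<in>S (Suc m). w u v) = wA w (S (Suc m)) u" unfolding wA_def
      by (rule sum.cong, insert u S_sub[of m] S_sub[of "Suc m"] m wg, auto simp: weighted_graph_def)
    thus "(\<Sum>v\<in>S (Suc m). w u v) \<le> D_S w S m" using D_ge[OF m u] by simp
  qed simp
  also have "\<dots> = D_S w S m * aa m" unfolding aa_def by (simp add: sum_distrib_left)
  finally show ?thesis using b by (simp add: mult_left_mono)
qed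


lemma sS_nonneg: "m \<le> n \<Longrightarrow> sS w S m \<ge> 0"
proof (induction m)
  case 0 thus ?case by simp
next
  case (Suc m)
  hence m: "m < n" by simp
  have "K_S w S m > 0" using Kpos m by simp
  thus ?case using Suc D_nonneg[OF m] by simp
qed

lemma aa0: "aa 0 = 0" unfolding aa_def using f0 by simp

lemma aa_bound: "m \<le> n \<Longrightarrow> aa m \<le> sS w S m * (\<Sum>j<m. EE j)"
proof (induction m)
  case 0 thus ?case using aa0 by simp
next
  case (Suc m)
  hence m: "m < n" and IH: "aa m \<le> sS w S m * (\<Sum>j<m. EE j)" by auto
  define K where "K = K_S w S m"
  define D where "D = D_S w S m"
  define s where "s = sS w S m"
  define Q where "Q = (\<Sum>j<m. EE j)"
  define E where "E = EE m"
  define a where "a = aa m"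
  define a' where "a' = aa (Suc m)"
  have K: "K > 0" unfolding K_def using Kpos m by simp
  have D: "D \<ge> 0" unfolding D_def using D_nonneg[OF m] .
  have s: "s \<ge> 0" unfolding s_def using sS_nonneg m by simp
  have Q: "Q \<ge> 0" unfolding Q_def using EE_nonneg m by (intro sum_nonneg, auto)
  have E: "E \<ge> 0" unfolding E_def using EE_nonneg m by simp
  have a: "a \<le> s * Q" using IH unfolding a_def s_def Q_def .
  have lay: "\<And>\<beta>. \<beta> \<ge> 0 \<Longrightarrow> \<beta> * K * a' \<le> (1 + \<beta>) * (\<beta> * E + D * a)"
    using layer_ineq[OF m] unfolding K_def a'_def E_def D_def a_def by simp
  have Da: "D * a \<le> D * s * Q" using mult_left_mono[OF a D] by (simp add: mult.assoc)
  have key: "K * a' \<le> (1 + D * s) * (E + Q)"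
  proof (cases "D * s > 0")
    case True
    define \<beta> where "\<beta> = D * s"
    have b: "\<beta> > 0" using True unfolding \<beta>_def by simp
    have "\<beta> * (K * a') = \<beta> * K * a'" by simp
    also have "\<dots> \<le> (1 + \<beta>) * (\<beta> * E + D * a)" using lay b by simp
    also have "\<dots> \<le> (1 + \<beta>) * (\<beta> * E + \<beta> * Q)"
      using Da b unfolding \<beta>_def by (intro mult_left_mono, auto)
    also have "\<dots> = \<beta> * ((1 + \<beta>) * (E + Q))" by (simp add: algebra_simps)
    finally have "\<beta> * (K * a') \<le> \<beta> * ((1 + \<beta>) * (E + Q))" .
    hence "K * a' \<le> (1 + \<beta>) * (E + Q)" using b by simp
    thus ?thesis unfolding \<beta>_def .
  next
    case False
    have "D * s \<ge> 0" using D s by simp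
    hence Ds: "D * s = 0" using False by simp
    have Da0: "D * a \<le> 0" using Da Ds by simp
    have "K * a' \<le> E"
    proof (rule eps_lemma[OF E])
      fix \<beta> :: real assume b: "\<beta> > 0"
      have "\<beta> * (K * a') \<le> (1 + \<beta>) * (\<beta> * E + D * a)" using lay[of \<beta>] b by simp
      also have "\<dots> \<le> (1 + \<beta>) * (\<beta> * E)" using Da0 b by (intro mult_left_mono, auto)
      also have "\<dots> = \<beta> * ((1 + \<beta>) * E)" by simp
      finally show "K * a' \<le> (1 + \<beta>) * E" using b by simp
    qed
    thus ?thesis unfolding Ds using Q by simp
  qed
  have "a' \<le> (1 + D * s) * (E + Q) / K" using key K by (simp add: field_simps)
  also have "\<dots> = (1 / K + D / K * s) * (E + Q)" using K by (simp add: field_simps)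
  finally show ?case unfolding a'_def K_def D_def s_def E_def Q_def by (simp add: add.commute)
qed

lemma sum_f_sq: "(\<Sum>v<N. (f v)^2) = (\<Sum>m\<le>n. aa m)"
proof -
  have U: "{..<N} = (\<Union>m\<in>{..n}. S m)" using part unfolding is_partition_def by auto
  have "(\<Sum>v<N. (f v)^2) = (\<Sum>v\<in>(\<Union>m\<in>{..n}. S m). (f v)^2)" unfolding U ..
  also have "\<dots> = (\<Sum>m\<le>n. aa m)" unfolding aa_def
    by (rule sum.UNION_disjoint, simp, insert S_fin, simp,
        insert part, auto simp: is_partition_def)
  finally show ?thesis .
qed

lemma EE_total: "(\<Sum>j<n. EE j) \<le> (\<Sum>u<N. \<Sum>v<N. w u v * (f v - f u)^2)"
proof -
  define G where "G = (\<lambda>u. \<Sum>v<N. w u v * (f v - f u)^2)"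
  have Gnn: "u < N \<Longrightarrow> G u \<ge> 0" for u unfolding G_def
    by (intro sum_nonneg mult_nonneg_nonneg w_nonneg, auto)
  have "(\<Sum>j<n. EE j) \<le> (\<Sum>j<n. \<Sum>u\<in>S j. G u)"
  proof (rule sum_mono)
    fix j assume "j \<in> {..<n}" hence j: "j < n" by simp
    show "EE j \<le> (\<Sum>u\<in>S j. G u)" unfolding EE_def G_def
    proof (rule sum_mono, rule sum_mono2)
      fix u assume u: "u \<in> S j"
      show "S (Suc j) \<subseteq> {..<N}" using S_sub[of "Suc j"] j by simp
      show "0 \<le> w u b * (f b - f u)^2" if "b \<in> {..<N} - S (Suc j)" for b
        using u S_sub[of j] j that by (auto intro!: mult_nonneg_nonneg w_nonneg)
    qed simp
  qed
  also have "\<dots> = (\<Sum>u\<in>(\<Union>j\<in>{..<n}. S j). G u)"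
    by (rule sum.UNION_disjoint[symmetric], simp, insert S_fin, simp,
        insert part, auto simp: is_partition_def)
  also have "\<dots> \<le> (\<Sum>u<N. G u)"
  proof (rule sum_mono2)
    show "(\<Union>j\<in>{..<n}. S j) \<subseteq> {..<N}"
    proof
      fix x assume "x \<in> (\<Union>j\<in>{..<n}. S j)"
      then obtain j where "j < n" "x \<in> S j" by auto
      thus "x \<in> {..<N}" using S_sub[of j] by auto
    qed
  qed (auto simp: Gnn)
  finally show ?thesis unfolding G_def .
qed

lemma hardy_ineq:
  "(\<Sum>v<N. (f v)^2) \<le> (\<Sum>m=1..n. sS w S m) * (\<Sum>u<N. \<Sum>v<N. w u v * (f v - f u)^2)"
proof -
  define T where "T = (\<Sum>u<N. \<Sum>v<N. w u v * (f v - f u)^2)"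
  have "(\<Sum>v<N. (f v)^2) = (\<Sum>m\<le>n. aa m)" by (rule sum_f_sq)
  also have "\<dots> \<le> (\<Sum>m\<le>n. sS w S m * T)"
  proof (rule sum_mono)
    fix m assume "m \<in> {..n}" hence m: "m \<le> n" by simp
    have "(\<Sum>j<m. EE j) \<le> (\<Sum>j<n. EE j)"
      by (rule sum_mono2, insert m EE_nonneg, auto)
    also have "\<dots> \<le> T" unfolding T_def by (rule EE_total)
    finally have "(\<Sum>j<m. EE j) \<le> T" .
    hence "sS w S m * (\<Sum>j<m. EE j) \<le> sS w S m * T"
      by (rule mult_left_mono, insert sS_nonneg[OF m])
    thus "aa m \<le> sS w S m * T" using aa_bound[OF m] by simp
  qed
  also have "\<dots> = (\<Sum>m\<le>n. sS w S m) * T" by (simp add: sum_distrib_right)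
  also have "(\<Sum>m\<le>n. sS w S m) = (\<Sum>m=1..n. sS w S m)"
  proof -
    have "{..n} = insert 0 {1..n}" by auto
    thus ?thesis by simp
  qed
  finally show ?thesis unfolding T_def .
qed

end



lemma main_card_bound:
  fixes N n :: nat and w :: "nat \<Rightarrow> nat \<Rightarrow> real" and S :: "nat \<Rightarrow> nat set"
    and U :: "real mat" and es :: "real list"
  assumes wg: "weighted_graph N w"
    and part: "is_partition N S n"
    and Kpos: "\<forall>m<n. K_S w S m > 0"
    and U: "U \<in> carrier_mat N N" and Uo: "transpose_mat U * U = 1\<^sub>m N"
    and les: "length es = N" and UD: "transpose_mat U * laplacian N w * U = diag_of es"
  shows "card {i. i < N \<and> ereal (es ! i) < threshold w S n} \<le> card (S 0)"
proof (rule ccontr)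
  define L where "L = laplacian N w"
  have L: "L \<in> carrier_mat N N" unfolding L_def by (rule laplacian_carrier)
  define J where "J = {i. i < N \<and> ereal (es ! i) < threshold w S n}"
  define S0 where "S0 = S 0"
  define k where "k = card S0"
  define m where "m = card J"
  assume "\<not> card {i. i < N \<and> ereal (es ! i) < threshold w S n} \<le> card (S 0)"
  hence km: "k < m" unfolding k_def m_def J_def S0_def by simp
  have S0sub: "S0 \<subseteq> {..<N}" unfolding S0_def using part unfolding is_partition_def by blast
  have finS0: "finite S0" using S0sub finite_subset by blast
  have Jsub: "J \<subseteq> {..<N}" unfolding J_def by auto
  have finJ: "finite J" using Jsub finite_subset by blast
  obtain \<sigma> where \<sigma>: "bij_betw \<sigma> {0..<k} S0" using ex_bij_betw_nat_finite[OF finS0] unfolding k_def by blast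
  obtain \<tau> where \<tau>: "bij_betw \<tau> {0..<m} J" using ex_bij_betw_nat_finite[OF finJ] unfolding m_def by blast
  define M where "M = mat k m (\<lambda>(a,b). U $$ (\<sigma> a, \<tau> b))"
  have M: "M \<in> carrier_mat k m" unfolding M_def by simp
  obtain x where x: "x \<in> carrier_vec m" and x0: "x \<noteq> 0\<^sub>v m" and Mx: "M *\<^sub>v x = 0\<^sub>v k"
    using underdetermined_kernel[OF M km] by blast
  define \<tau>' where "\<tau>' = inv_into {0..<m} \<tau>"
  have \<tau>'\<tau>: "\<tau>' (\<tau> b) = b" if "b < m" for b
    unfolding \<tau>'_def using \<tau> that by (simp add: bij_betw_def inv_into_f_f)
  define g where "g = vec N (\<lambda>i. if i \<in> J then x $ (\<tau>' i) else 0)"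
  have g: "g \<in> carrier_vec N" unfolding g_def by simp
  define f where "f = U *\<^sub>v g"
  have f: "f \<in> carrier_vec N" unfolding f_def using U g by simp
  obtain b0 where b0: "b0 < m" and xb0: "x $ b0 \<noteq> 0"
    using x x0 by (metis carrier_vecD eq_vecI index_zero_vec(1) index_zero_vec(2))
  have tb0: "\<tau> b0 \<in> J" using \<tau> b0 by (auto simp: bij_betw_def)
  have gtb0: "g $ (\<tau> b0) = x $ b0" unfolding g_def using tb0 Jsub \<tau>'\<tau>[OF b0] by auto
  have gJ: "g $ i = 0" if "i < N" "i \<notin> J" for i unfolding g_def using that by simp
  have fS0: "f $ s = 0" if s: "s \<in> S0" for s
  proof -
    have sN: "s < N" using s S0sub by auto
    define a where "a = inv_into {0..<k} \<sigma> s"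
    have a: "a < k" and \<sigma>a: "\<sigma> a = s" unfolding a_def using \<sigma> s
      by (auto simp: bij_betw_def inv_into_into f_inv_into_f)
    have "f $ s = (\<Sum>i\<in>{..<N}. U $$ (s, i) * g $ i)"
      unfolding f_def using U g sN by (simp add: scalar_prod_def atLeast0LessThan)
    also have "\<dots> = (\<Sum>i\<in>{..<N}. if i \<in> J then U $$ (s, i) * x $ (\<tau>' i) else 0)"
      by (rule sum.cong, auto simp: g_def)
    also have "\<dots> = (\<Sum>i\<in>{..<N} \<inter> J. U $$ (s, i) * x $ (\<tau>' i))"
      by (rule sum.inter_restrict[symmetric], simp)
    also have "{..<N} \<inter> J = J" using Jsub by auto
    also have "(\<Sum>i\<in>J. U $$ (s, i) * x $ (\<tau>' i)) = (\<Sum>b\<in>{0..<m}. U $$ (s, \<tau> b) * x $ (\<tau>' (\<tau> b)))"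
      by (rule sum.reindex_bij_betw[OF \<tau>, symmetric])
    also have "\<dots> = (\<Sum>b\<in>{0..<m}. M $$ (a, b) * x $ b)"
      by (rule sum.cong, auto simp: \<tau>'\<tau> M_def a \<sigma>a)
    also have "\<dots> = (M *\<^sub>v x) $ a" using M a x by (simp add: scalar_prod_def)
    also have "\<dots> = 0" unfolding Mx using a by simp
    finally show ?thesis .
  qed
  have gg: "g \<bullet> g = (\<Sum>i<N. (g $ i)^2)" using g by (simp add: scalar_prod_def atLeast0LessThan power2_eq_square)
  have ff: "f \<bullet> f = (\<Sum>i<N. (f $ i)^2)" using f by (simp add: scalar_prod_def atLeast0LessThan power2_eq_square)
  have fg: "f \<bullet> f = g \<bullet> g" unfolding f_def by (rule spectral_quad(2)[OF laplacian_carrier U Uo les UD g])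
  have fLf: "f \<bullet> (L *\<^sub>v f) = (\<Sum>i<N. es ! i * (g $ i)^2)" unfolding f_def L_def
    by (rule spectral_quad(1)[OF laplacian_carrier U Uo les UD g])
  have tb0N: "\<tau> b0 < N" using tb0 Jsub by auto
  have gpos: "(\<Sum>i<N. (g $ i)^2) > 0"
    by (rule sum_pos2[of _ "\<tau> b0"], insert tb0N gtb0 xb0, auto)
  have hardy: "(\<Sum>v<N. (f $ v)^2) \<le> (\<Sum>m=1..n. sS w S m) * (\<Sum>u<N. \<Sum>v<N. w u v * (f $ v - f $ u)^2)"
    by (rule hardy_ineq[OF wg part Kpos], insert fS0, auto simp: S0_def)
  have quad: "2 * (f \<bullet> (L *\<^sub>v f)) = (\<Sum>u<N. \<Sum>v<N. w u v * (f $ v - f $ u)^2)"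
    unfolding L_def by (rule laplacian_quad[OF wg f])
  define \<Delta> where "\<Delta> = (\<Sum>m=1..n. sS w S m)"
  have \<Delta>nn: "\<Delta> \<ge> 0" unfolding \<Delta>_def using sS_nonneg[OF wg part Kpos, of "\<lambda>_. 0"]
    by (intro sum_nonneg, auto)
  have \<delta>: "(delta2 w S n)^2 = \<Delta>" unfolding delta2_def \<Delta>_def sS_closed[symmetric]
    using \<Delta>nn unfolding \<Delta>_def by simp
  have main: "(\<Sum>i<N. (g $ i)^2) \<le> \<Delta> * (2 * (\<Sum>i<N. es ! i * (g $ i)^2))"
    using hardy unfolding quad[symmetric] fLf ff[symmetric] fg gg \<Delta>_def .
  show False
  proof (cases "delta2 w S n = 0")
    case True
    hence "\<Delta> = 0" using \<delta> by simp
    thus False using main gpos by simp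
  next
    case False
    define c where "c = 1 / (2 * (delta2 w S n)^2)"
    have thr: "threshold w S n = ereal c" unfolding threshold_def c_def using False by simp
    have esJ: "es ! i < c" if "i \<in> J" for i using that unfolding J_def thr by simp
    have \<Delta>pos: "\<Delta> > 0" using \<delta> False by (metis power2_less_eq_zero_iff not_less order_le_less \<Delta>nn)
    have c\<Delta>: "c * (2 * \<Delta>) = 1" unfolding c_def \<delta> using \<Delta>pos by simp
    have "(\<Sum>i<N. (c - es ! i) * (g $ i)^2) > 0"
    proof (rule sum_pos2[of _ "\<tau> b0"])
      show "0 < (c - es ! (\<tau> b0)) * (g $ (\<tau> b0))^2" using esJ[OF tb0] gtb0 xb0 by simp
      fix i assume "i \<in> {..<N}"
      thus "0 \<le> (c - es ! i) * (g $ i)^2" using esJ gJ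
        by (cases "i \<in> J", auto simp: less_imp_le)
    qed (insert tb0N, auto)
    hence "(\<Sum>i<N. es ! i * (g $ i)^2) < c * (\<Sum>i<N. (g $ i)^2)"
      by (simp add: algebra_simps sum_subtractf sum_distrib_left)
    hence "\<Delta> * (2 * (\<Sum>i<N. es ! i * (g $ i)^2)) < \<Delta> * (2 * (c * (\<Sum>i<N. (g $ i)^2)))"
      using \<Delta>pos by simp
    also have "\<dots> = (c * (2 * \<Delta>)) * (\<Sum>i<N. (g $ i)^2)" by (simp add: algebra_simps)
    also have "\<dots> = (\<Sum>i<N. (g $ i)^2)" unfolding c\<Delta> by simp
    finally show False using main by simp
  qed
qed


theorem theorem3p3:
  fixes N n :: nat and w :: "nat \<Rightarrow> nat \<Rightarrow> real" and S :: "nat \<Rightarrow> nat set"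
  assumes "N \<ge> 1"
    and "weighted_graph N w"
    and "connected_wg N w"
    and "is_partition N S n"
    and "\<forall>m<n. K_S w S m > 0"
  shows "eig_count (laplacian N w) (\<lambda>x. 0 \<le> x \<and> ereal x < threshold w S n) \<le> card (S 0) \<and>
         eig_count (laplacian N w)
           (\<lambda>x. threshold w S n \<le> ereal x \<and> x \<le> max_eig (laplacian N w)) \<ge> N - card (S 0)"
proof -
  note wg = assms(2) and part = assms(4) and Kpos = assms(5)
  obtain U es where U: "U \<in> carrier_mat N N" and Uo: "transpose_mat U * U = 1\<^sub>m N"
    and les: "length es = N" and UD: "transpose_mat U * laplacian N w * U = diag_of es"
    using spectral_real_sym[OF laplacian_carrier laplacian_sym[OF wg]] by blast
  have cp: "char_poly (laplacian N w) = (\<Prod>a\<leftarrow>es. [:- a, 1:])"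
    by (rule spectral_char_poly[OF laplacian_carrier U Uo les UD])
  define c where "c = threshold w S n"
  have bound: "length (filter (\<lambda>x. ereal x < c) es) \<le> card (S 0)"
    unfolding length_filter_conv_card les c_def
    by (rule main_card_bound[OF wg part Kpos U Uo les UD])
  have 1: "eig_count (laplacian N w) (\<lambda>x. 0 \<le> x \<and> ereal x < c) \<le> card (S 0)"
  proof -
    have "filter (\<lambda>x. 0 \<le> x \<and> ereal x < c) es = filter (\<lambda>x. 0 \<le> x) (filter (\<lambda>x. ereal x < c) es)"
      by (simp add: filter_filter conj_commute)
    hence "length (filter (\<lambda>x. 0 \<le> x \<and> ereal x < c) es) \<le> length (filter (\<lambda>x. ereal x < c) es)"
      by (simp only: length_filter_le)
    thus ?thesis unfolding eig_count_list[OF cp] using bound by simp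
  qed
  have mx: "max_eig (laplacian N w) = Max (set es)" by (rule max_eig_list[OF cp])
  have "eig_count (laplacian N w) (\<lambda>x. c \<le> ereal x \<and> x \<le> max_eig (laplacian N w))
      = length (filter (\<lambda>x. \<not> ereal x < c) es)"
    unfolding eig_count_list[OF cp] mx
    by (rule arg_cong[where f = length], rule filter_cong, auto)
  also have "\<dots> = N - length (filter (\<lambda>x. ereal x < c) es)"
    using sum_length_filter_compl[of "\<lambda>x. ereal x < c" es] les by simp
  finally have 2: "eig_count (laplacian N w) (\<lambda>x. c \<le> ereal x \<and> x \<le> max_eig (laplacian N w)) \<ge> N - card (S 0)"
    using bound by simp
  show ?thesis using 1 2 unfolding c_def by simp
qed

end
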